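(* Let $G$ be a simple graph with $m$ edges and girth $g(G)\ge 4$. Define $\varrho_1(G)=\sum_{uv\in E(G)} m(G-\{u,v\})\,M_1(G-\{u,v\})$, where $m(H)$ is the number of edges of $H$. Then $$\varrho_1(G)=(m^2+4m+5)M_1(G)-(m+2)F(G)-(4m+6)M_2(G)+M_1^4(G)-M_1(G)^2+\alpha(G)-2m^2-2m+2\gamma(G),$$ where $M_1(G)^2$ denotes the square of the number $M_1(G)$.
   Context: All graphs are finite, simple and undirected; $d_G(v)$ is the degree of $v$; $G-\{u,v\}$ is obtained by deleting vertices $u,v$. $M_1^\alpha(G)=\sum_{v}d_G(v)^\alpha$ (exponent on degrees), $M_1=M_1^2$, $F=M_1^3$; $M_2(G)=\sum_{uv\in E(G)}d_G(u)d_G(v)$; $\alpha(G)=\sum_{uv\in E(G)}d_G(u)d_G(v)[d_G(u)+d_G(v)]$. A vertex $v$ is said to be incident to an edge $e=xy$ (with $v\ne x,y$) if $\{vx,vy\}\cap E(G)\neq\emptyset$; $\Lambda(G)$ is the set of all pairs $\{v,e\}$ with $v\in V(G)$, $e\in E(G)$ and $v$ incident to $e$ in this sense; and $\gamma(G)=\sum_{\{v,xy\}\in\Lambda(G)}d_G(v)\big[d_G(x)+d_G(y)\big]$. *)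

theory Defs
  imports Main
begin

definition simple_graph :: "'a set \<Rightarrow> 'a set set \<Rightarrow> bool" where
  "simple_graph V E \<longleftrightarrow> finite V \<and> (\<forall>e\<in>E. \<exists>x y. x \<noteq> y \<and> x \<in> V \<and> y \<in> V \<and> e = {x, y})"

definition deg :: "'a set set \<Rightarrow> 'a \<Rightarrow> nat" where
  "deg E v = card {e \<in> E. v \<in> e}"

definition girth_ge4 :: "'a set set \<Rightarrow> bool" where
  "girth_ge4 E \<longleftrightarrow> \<not> (\<exists>x y z. {x, y} \<in> E \<and> {y, z} \<in> E \<and> {x, z} \<in> E \<and> x \<noteq> y \<and> y \<noteq> z \<and> x \<noteq> z)"

definition del_verts_V :: "'a set \<Rightarrow> 'a set \<Rightarrow> 'a set" where
  "del_verts_V V S = V - S"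

definition del_verts_E :: "'a set set \<Rightarrow> 'a set \<Rightarrow> 'a set set" where
  "del_verts_E E S = {e \<in> E. e \<inter> S = {}}"

definition M1pow :: "'a set \<Rightarrow> 'a set set \<Rightarrow> nat \<Rightarrow> int" where
  "M1pow V E k = (\<Sum>v\<in>V. int (deg E v) ^ k)"

abbreviation M1 :: "'a set \<Rightarrow> 'a set set \<Rightarrow> int" where
  "M1 V E \<equiv> M1pow V E 2"

abbreviation Fidx :: "'a set \<Rightarrow> 'a set set \<Rightarrow> int" where
  "Fidx V E \<equiv> M1pow V E 3"

definition M2 :: "'a set set \<Rightarrow> int" where
  "M2 E = (\<Sum>e\<in>E. \<Prod>x\<in>e. int (deg E x))"

definition alpha_idx :: "'a set set \<Rightarrow> int" where
  "alpha_idx E = (\<Sum>e\<in>E. (\<Prod>x\<in>e. int (deg E x)) * (\<Sum>x\<in>e. int (deg E x)))"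

definition Lambda :: "'a set \<Rightarrow> 'a set set \<Rightarrow> ('a \<times> 'a set) set" where
  "Lambda V E = {(v, e). v \<in> V \<and> e \<in> E \<and> v \<notin> e \<and> (\<exists>x\<in>e. {v, x} \<in> E)}"

definition gamma_idx :: "'a set \<Rightarrow> 'a set set \<Rightarrow> int" where
  "gamma_idx V E = (\<Sum>(v, e)\<in>Lambda V E. int (deg E v) * (\<Sum>x\<in>e. int (deg E x)))"

definition rho1 :: "'a set \<Rightarrow> 'a set set \<Rightarrow> int" where
  "rho1 V E = (\<Sum>e\<in>E. int (card (del_verts_E E e)) * M1 (del_verts_V V e) (del_verts_E E e))"

end

theory Submission imports Defs begin

locale tfg =
  fixes V :: "'a set" and E :: "'a set set"
  assumes sg: "simple_graph V E" and tf: "girth_ge4 E"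
begin

definition d :: "'a \<Rightarrow> int" where "d x = int (deg E x)"
definition N :: "'a \<Rightarrow> 'a set" where "N x = {w. {x,w} \<in> E}"
definition S :: "'a \<Rightarrow> int" where "S x = (\<Sum>w\<in>N x. d w)"
definition Lam :: "'a set \<Rightarrow> 'a set" where
  "Lam e = {w\<in>V. w \<notin> e \<and> (\<exists>x\<in>e. {w,x} \<in> E)}"

lemma finV: "finite V" using sg by (simp add: simple_graph_def)
lemma edge: "e \<in> E \<Longrightarrow> \<exists>u v. u \<noteq> v \<and> u \<in> V \<and> v \<in> V \<and> e = {u,v}"
  using sg by (simp add: simple_graph_def)
lemma EPow: "E \<subseteq> Pow V" using edge by blast
lemma finE: "finite E" using EPow finV by (meson finite_Pow_iff finite_subset)
lemma e_sub: "e \<in> E \<Longrightarrow> e \<subseteq> V" using EPow by blast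
lemma fin_e: "e \<in> E \<Longrightarrow> finite e" using e_sub finV finite_subset by blast
lemma pair_ne: "{x,y} \<in> E \<Longrightarrow> x \<noteq> y"
proof
  assume "{x,y} \<in> E" "x = y"
  then obtain u v where "u \<noteq> v" "{x} = {u,v}" using edge by fastforce
  then show False by (metis doubleton_eq_iff insert_absorb2)
qed
lemma pair_V: "{x,y} \<in> E \<Longrightarrow> x \<in> V \<and> y \<in> V" using e_sub by blast
lemma notri: "{x,y} \<in> E \<Longrightarrow> {y,z} \<in> E \<Longrightarrow> {x,z} \<in> E \<Longrightarrow> False"
  using tf pair_ne unfolding girth_ge4_def by blast
lemma N_sub: "N x \<subseteq> V" unfolding N_def using pair_V by blast
lemma finN: "finite (N x)" using N_sub finV finite_subset by blast
lemma x_notin_N: "x \<notin> N x" unfolding N_def using pair_ne by blast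
lemma edge_other: "f \<in> E \<Longrightarrow> x \<in> f \<Longrightarrow> \<exists>w. w \<noteq> x \<and> f = {x,w}"
  using edge by fastforce
lemma N_bij: "bij_betw (\<lambda>w. {x,w}) (N x) {e\<in>E. x\<in>e}"
proof (rule bij_betwI')
  fix a b assume "a \<in> N x" "b \<in> N x"
  then show "({x,a} = {x,b}) = (a = b)" using x_notin_N by (metis doubleton_eq_iff)
next
  fix a assume "a \<in> N x" then show "{x,a} \<in> {e\<in>E. x\<in>e}" by (simp add: N_def)
next
  fix y assume "y \<in> {e\<in>E. x\<in>e}"
  then obtain w where "w \<noteq> x" "y = {x,w}" "y \<in> E" using edge_other by blast
  then show "\<exists>a\<in>N x. y = {x,a}" by (auto simp: N_def)
qed
lemma card_N: "card (N x) = deg E x"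
  unfolding deg_def using bij_betw_same_card[OF N_bij] .
lemma S_alt: "S x = (\<Sum>e\<in>{e\<in>E. x\<in>e}. \<Sum>w\<in>e-{x}. d w)"
proof -
  have "(\<Sum>e\<in>{e\<in>E. x\<in>e}. \<Sum>w\<in>e-{x}. d w) = (\<Sum>w\<in>N x. \<Sum>w'\<in>{x,w}-{x}. d w')"
    using sum.reindex_bij_betw[OF N_bij[of x], of "\<lambda>e. \<Sum>w\<in>e-{x}. d w"] by (simp only:)
  also have "\<dots> = (\<Sum>w\<in>N x. d w)"
    by (rule sum.cong[OF refl]) (use x_notin_N in \<open>auto simp: insert_Diff_if\<close>)
  finally show ?thesis by (simp add: S_def)
qed

lemma DC: "(\<Sum>e\<in>E. \<Sum>x\<in>e. f x e) = (\<Sum>x\<in>V. \<Sum>e\<in>{e\<in>E. x\<in>e}. f x e)"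
proof -
  have "(\<Sum>e\<in>E. \<Sum>x\<in>e. f x e) = (\<Sum>e\<in>E. \<Sum>x\<in>V. if x \<in> e then f x e else 0)"
  proof (rule sum.cong[OF refl])
    fix e assume "e \<in> E"
    then have "{x\<in>V. x \<in> e} = e" using e_sub by blast
    then show "(\<Sum>x\<in>e. f x e) = (\<Sum>x\<in>V. if x \<in> e then f x e else 0)"
      using sum.inter_filter[OF finV, of "\<lambda>x. f x e" "\<lambda>x. x \<in> e"] by simp
  qed
  also have "\<dots> = (\<Sum>x\<in>V. \<Sum>e\<in>E. if x \<in> e then f x e else 0)" by (rule sum.swap)
  also have "\<dots> = (\<Sum>x\<in>V. \<Sum>e\<in>{e\<in>E. x\<in>e}. f x e)"
    by (rule sum.cong[OF refl]) (simp add: sum.inter_filter[OF finE])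
  finally show ?thesis .
qed

lemma DC1: "(\<Sum>e\<in>E. \<Sum>x\<in>e. g x) = (\<Sum>x\<in>V. d x * g x)"
  using DC[of "\<lambda>x e. g x"] by (simp add: d_def deg_def)


lemma pair_unique: assumes "u \<noteq> v" "f \<in> E" "u \<in> f" "v \<in> f" shows "f = {u,v}"
proof -
  obtain a b where "a \<noteq> b" "f = {a,b}" using edge assms(2) by blast
  then show ?thesis using assms by auto
qed

lemma card_del: assumes e: "{u,v} \<in> E" and uv: "u \<noteq> v"
  shows "int (card (del_verts_E E {u,v})) = int (card E) - d u - d v + 1"
proof -
  let ?D = "del_verts_E E {u,v}"
  let ?A = "{f\<in>E. u\<in>f}" let ?B = "{f\<in>E. v\<in>f}"
  have un: "E = ?D \<union> (?A \<union> ?B)" unfolding del_verts_E_def by blast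
  have dj: "?D \<inter> (?A \<union> ?B) = {}" unfolding del_verts_E_def by blast
  have AB: "?A \<inter> ?B = {{u,v}}"
  proof -
    have "\<And>f. f \<in> ?A \<inter> ?B \<Longrightarrow> f = {u,v}" using pair_unique[OF uv] by blast
    then show ?thesis using e by blast
  qed
  have fD: "finite ?D" "finite ?A" "finite ?B" using finE unfolding del_verts_E_def by simp_all
  have fAB: "finite (?A \<union> ?B)" using fD by simp
  have "card (?D \<union> (?A \<union> ?B)) = card ?D + card (?A \<union> ?B)"
    by (rule card_Un_disjoint[OF fD(1) fAB dj])
  then have c1: "card E = card ?D + card (?A \<union> ?B)" using un by simp
  have c2: "card (?A \<union> ?B) + card (?A \<inter> ?B) = card ?A + card ?B"
    using card_Un_Int[OF fD(2,3)] by linarith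
  show ?thesis using c1 c2 AB by (simp add: d_def deg_def)
qed

lemma Lam_iff: assumes "u \<noteq> v"
  shows "w \<in> Lam {u,v} \<longleftrightarrow> w \<in> V \<and> w \<noteq> u \<and> w \<noteq> v \<and> ({w,u} \<in> E \<or> {w,v} \<in> E)"
  by (auto simp: Lam_def)

lemma deg_del: assumes e: "{u,v} \<in> E" and uv: "u \<noteq> v" and w: "w \<in> V" "w \<notin> {u,v}"
  shows "int (deg (del_verts_E E {u,v}) w) = d w - (if w \<in> Lam {u,v} then 1 else 0)"
proof -
  let ?A = "{f\<in>E. w\<in>f}"
  let ?B = "{f\<in>?A. f \<inter> {u,v} \<noteq> {}}"
  have eq: "{f\<in>del_verts_E E {u,v}. w\<in>f} = ?A - ?B" by (auto simp: del_verts_E_def)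
  have fA: "finite ?A" using finE by auto
  have Beq: "?B = {f. f = {w,u} \<and> {w,u} \<in> E} \<union> {f. f = {w,v} \<and> {w,v} \<in> E}"
  proof
    show "?B \<subseteq> {f. f = {w,u} \<and> {w,u} \<in> E} \<union> {f. f = {w,v} \<and> {w,v} \<in> E}"
    proof
      fix f assume f: "f \<in> ?B"
      then have "u \<in> f \<or> v \<in> f" by auto
      then show "f \<in> {f. f = {w,u} \<and> {w,u} \<in> E} \<union> {f. f = {w,v} \<and> {w,v} \<in> E}"
        using f w pair_unique[of w u f] pair_unique[of w v f] by auto
    qed
  qed auto
  have cB: "card ?B = (if w \<in> Lam {u,v} then 1 else 0)"
  proof (cases "{w,u} \<in> E")
    case True
    then have "{w,v} \<notin> E" using notri[of w u v] e by blast
    then show ?thesis using True Beq w uv by (simp add: Lam_iff)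
  next
    case False
    show ?thesis
    proof (cases "{w,v} \<in> E")
      case True
      then have "?B = {{w,v}}" using Beq False by auto
      then show ?thesis using True w uv by (simp add: Lam_iff)
    next
      case F2: False
      have B0: "?B = {}" using Beq False F2 by auto
      have nl: "w \<notin> Lam {u,v}" using F2 False uv by (simp add: Lam_iff)
      show ?thesis by (subst B0) (simp add: nl)
    qed
  qed
  have "card ?B \<le> card ?A" by (rule card_mono[OF fA]) auto
  moreover have "card (?A - ?B) = card ?A - card ?B"
    using card_Diff_subset[of ?B ?A] fA finite_subset[of ?B ?A] by blast
  ultimately have "int (card (?A - ?B)) = int (card ?A) - int (card ?B)"
    by (simp add: of_nat_diff)
  then show ?thesis using eq cB by (simp add: deg_def d_def)
qed

lemma Lam_sub: "Lam e \<subseteq> V - e" by (auto simp: Lam_def)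
lemma finLam: "finite (Lam e)" using Lam_sub finV finite_subset by blast

lemma M1_del: assumes e: "{u,v} \<in> E" and uv: "u \<noteq> v"
  shows "M1 (del_verts_V V {u,v}) (del_verts_E E {u,v})
     = M1 V E - d u^2 - d v^2 - 2*(\<Sum>w\<in>Lam {u,v}. d w) + int (card (Lam {u,v}))"
proof -
  let ?W = "V - {u,v}"
  have fW: "finite ?W" using finV by simp
  have "M1 (del_verts_V V {u,v}) (del_verts_E E {u,v}) = (\<Sum>w\<in>?W. (d w - (if w \<in> Lam {u,v} then 1 else 0))^2)"
    unfolding M1pow_def del_verts_V_def by (rule sum.cong[OF refl]) (use deg_del[OF e uv] in auto)
  also have "\<dots> = (\<Sum>w\<in>?W. d w^2 - (if w \<in> Lam {u,v} then 2 * d w - 1 else 0))"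
    by (rule sum.cong[OF refl]) (simp add: power2_eq_square algebra_simps)
  also have "\<dots> = (\<Sum>w\<in>?W. d w^2) - (\<Sum>w\<in>?W. (if w \<in> Lam {u,v} then 2 * d w - 1 else 0))"
    by (simp add: sum_subtractf)
  also have "(\<Sum>w\<in>?W. (if w \<in> Lam {u,v} then 2 * d w - 1 else 0)) = (\<Sum>w\<in>{w\<in>?W. w \<in> Lam {u,v}}. 2 * d w - 1)"
    by (rule sum.inter_filter[OF fW, symmetric])
  also have "{w\<in>?W. w \<in> Lam {u,v}} = Lam {u,v}" using Lam_sub by blast
  also have "(\<Sum>w\<in>Lam {u,v}. 2 * d w - 1) = 2*(\<Sum>w\<in>Lam {u,v}. d w) - int (card (Lam {u,v}))"
    by (simp add: sum_subtractf sum_distrib_left)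
  also have "(\<Sum>w\<in>?W. d w^2) = M1 V E - d u^2 - d v^2"
  proof -
    have "{u,v} \<subseteq> V" using pair_V e by blast
    then have "(\<Sum>w\<in>V. d w^2) = (\<Sum>w\<in>?W. d w^2) + (\<Sum>w\<in>{u,v}. d w^2)"
      using sum.subset_diff finV by blast
    then show ?thesis using uv by (simp add: M1pow_def d_def)
  qed
  finally show ?thesis by simp
qed

lemma Lam_eq: assumes e: "{u,v} \<in> E" and uv: "u \<noteq> v"
  shows "Lam {u,v} = (N u - {v}) \<union> (N v - {u})"
  using pair_V x_notin_N uv by (auto simp: Lam_iff N_def insert_commute)

lemma Lam_disj: assumes e: "{u,v} \<in> E" and uv: "u \<noteq> v"
  shows "(N u - {v}) \<inter> (N v - {u}) = {}"
  using notri[of u _ v] e by (auto simp: N_def insert_commute)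

lemma Lam_card: assumes e: "{u,v} \<in> E" and uv: "u \<noteq> v"
  shows "int (card (Lam {u,v})) = d u + d v - 2"
proof -
  have "v \<in> N u" "u \<in> N v" using e by (auto simp: N_def insert_commute)
  then have "card (N u - {v}) = card (N u) - 1" "card (N v - {u}) = card (N v) - 1"
    by (auto simp: finN)
  moreover have "card (N u) \<ge> 1" "card (N v) \<ge> 1" using \<open>v \<in> N u\<close> \<open>u \<in> N v\<close> finN
    by (metis One_nat_def Suc_leI card_gt_0_iff empty_iff)+
  ultimately show ?thesis using Lam_eq[OF e uv] card_Un_disjoint[OF _ _ Lam_disj[OF e uv]] finN
    by (simp add: card_N d_def)
qed

lemma Lam_sum: assumes e: "{u,v} \<in> E" and uv: "u \<noteq> v"
  shows "(\<Sum>w\<in>Lam {u,v}. d w) = S u + S v - d u - d v"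
proof -
  have "v \<in> N u" "u \<in> N v" using e by (auto simp: N_def insert_commute)
  have "(\<Sum>w\<in>Lam {u,v}. d w) = (\<Sum>w\<in>N u - {v}. d w) + (\<Sum>w\<in>N v - {u}. d w)"
    using Lam_eq[OF e uv] sum.union_disjoint[OF _ _ Lam_disj[OF e uv]] finN by simp
  also have "\<dots> = (S u - d v) + (S v - d u)"
    using \<open>v \<in> N u\<close> \<open>u \<in> N v\<close> finN by (simp add: sum_diff1 S_def)
  finally show ?thesis by simp
qed


definition a :: "'a set \<Rightarrow> int" where "a e = (\<Sum>x\<in>e. d x)"
definition q :: "'a set \<Rightarrow> int" where "q e = (\<Sum>x\<in>e. d x ^ 2)"
definition s :: "'a set \<Rightarrow> int" where "s e = (\<Sum>x\<in>e. S x)"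

lemma L_edge: assumes "e \<in> E" shows "(\<Sum>w\<in>Lam e. d w) = s e - a e"
proof -
  obtain u v where uv: "u \<noteq> v" "e = {u,v}" using edge assms by blast
  then show ?thesis using Lam_sum[of u v] assms by (simp add: s_def a_def)
qed

lemma per_edge: assumes "e \<in> E"
  shows "int (card (del_verts_E E e)) * M1 (del_verts_V V e) (del_verts_E E e)
    = (int (card E) - a e + 1) * (M1 V E - q e - 2 * s e + 3 * a e - 2)"
proof -
  obtain u v where uv: "u \<noteq> v" "e = {u,v}" using edge assms by blast
  have e: "{u,v} \<in> E" using assms uv by simp
  show ?thesis unfolding uv(2) card_del[OF e uv(1)] M1_del[OF e uv(1)] Lam_card[OF e uv(1)] Lam_sum[OF e uv(1)]
    using uv(1) by (simp add: a_def q_def s_def algebra_simps power2_eq_square)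
qed

lemma rho_eq: "rho1 V E = (\<Sum>e\<in>E. (int (card E) - a e + 1) * (M1 V E - q e - 2 * s e + 3 * a e - 2))"
  unfolding rho1_def by (rule sum.cong[OF refl]) (rule per_edge)

lemma gamma_eq: "gamma_idx V E = (\<Sum>e\<in>E. a e * (s e - a e))"
proof -
  have Leq: "Lambda V E = (\<lambda>(e,v). (v,e)) ` (SIGMA e:E. Lam e)"
    by (auto simp: Lambda_def Lam_def image_iff)
  have inj: "inj_on (\<lambda>(e,v). (v,e)) (SIGMA e:E. Lam e)" by (auto simp: inj_on_def)
  have "gamma_idx V E = (\<Sum>(e,v)\<in>(SIGMA e:E. Lam e). d v * a e)"
    unfolding gamma_idx_def Leq by (subst sum.reindex[OF inj]) (simp add: d_def a_def case_prod_beta comp_def)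
  also have "\<dots> = (\<Sum>e\<in>E. \<Sum>v\<in>Lam e. d v * a e)"
    by (rule sum.Sigma[symmetric]) (auto simp: finE finLam)
  also have "\<dots> = (\<Sum>e\<in>E. a e * (s e - a e))"
  proof (rule sum.cong[OF refl])
    fix e assume "e \<in> E"
    have "(\<Sum>v\<in>Lam e. d v * a e) = (\<Sum>v\<in>Lam e. d v) * a e" by (rule sum_distrib_right[symmetric])
    then show "(\<Sum>v\<in>Lam e. d v * a e) = a e * (s e - a e)" using L_edge[OF \<open>e \<in> E\<close>] by simp
  qed
  finally show ?thesis .
qed

lemma pair_sum: "e \<in> E \<Longrightarrow> \<exists>u v. u \<noteq> v \<and> e = {u,v}" using edge by blast

lemma sum_a: "(\<Sum>e\<in>E. a e) = M1 V E"
  unfolding a_def DC1 M1pow_def by (simp add: d_def power2_eq_square)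
lemma sum_q: "(\<Sum>e\<in>E. q e) = Fidx V E"
  unfolding q_def DC1 M1pow_def by (rule sum.cong[OF refl]) (simp add: d_def power2_eq_square power3_eq_cube)
lemma sum_c: "(\<Sum>e\<in>E. \<Sum>x\<in>e. d x ^ 3) = M1pow V E 4"
  unfolding DC1 M1pow_def by (rule sum.cong[OF refl]) (simp add: d_def eval_nat_numeral)

lemma prod_e: "e \<in> E \<Longrightarrow> (\<Prod>x\<in>e. int (deg E x)) = (\<Prod>x\<in>e. d x)" by (simp add: d_def)

lemma sum_a2: "(\<Sum>e\<in>E. a e ^ 2) = Fidx V E + 2 * M2 E"
proof -
  have "(\<Sum>e\<in>E. a e ^ 2) = (\<Sum>e\<in>E. q e + 2 * (\<Prod>x\<in>e. int (deg E x)))"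
  proof (rule sum.cong[OF refl])
    fix e assume "e \<in> E"
    then obtain u v where "u \<noteq> v" "e = {u,v}" using pair_sum by blast
    then show "a e ^ 2 = q e + 2 * (\<Prod>x\<in>e. int (deg E x))"
      by (simp add: a_def q_def d_def power2_eq_square algebra_simps)
  qed
  also have "\<dots> = Fidx V E + 2 * M2 E" by (simp add: sum.distrib sum_q M2_def sum_distrib_left)
  finally show ?thesis .
qed

lemma sum_aq: "(\<Sum>e\<in>E. a e * q e) = M1pow V E 4 + alpha_idx E"
proof -
  have "(\<Sum>e\<in>E. a e * q e) = (\<Sum>e\<in>E. (\<Sum>x\<in>e. d x ^ 3) + (\<Prod>x\<in>e. int (deg E x)) * (\<Sum>x\<in>e. int (deg E x)))"
  proof (rule sum.cong[OF refl])
    fix e assume "e \<in> E"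
    then obtain u v where "u \<noteq> v" "e = {u,v}" using pair_sum by blast
    then show "a e * q e = (\<Sum>x\<in>e. d x ^ 3) + (\<Prod>x\<in>e. int (deg E x)) * (\<Sum>x\<in>e. int (deg E x))"
      by (simp add: a_def q_def d_def power2_eq_square power3_eq_cube algebra_simps)
  qed
  also have "\<dots> = M1pow V E 4 + alpha_idx E" by (simp add: sum.distrib sum_c alpha_idx_def)
  finally show ?thesis .
qed

lemma sum_s: "(\<Sum>e\<in>E. s e) = 2 * M2 E"
proof -
  have "(\<Sum>e\<in>E. s e) = (\<Sum>x\<in>V. d x * S x)" unfolding s_def DC1 ..
  also have "\<dots> = (\<Sum>x\<in>V. \<Sum>e\<in>{e\<in>E. x\<in>e}. d x * (\<Sum>w\<in>e-{x}. d w))"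
    by (simp add: S_alt sum_distrib_left)
  also have "\<dots> = (\<Sum>e\<in>E. \<Sum>x\<in>e. d x * (\<Sum>w\<in>e-{x}. d w))" by (rule DC[symmetric])
  also have "\<dots> = (\<Sum>e\<in>E. 2 * (\<Prod>x\<in>e. int (deg E x)))"
  proof (rule sum.cong[OF refl])
    fix e assume "e \<in> E"
    then obtain u v where "u \<noteq> v" "e = {u,v}" using pair_sum by blast
    then show "(\<Sum>x\<in>e. d x * (\<Sum>w\<in>e-{x}. d w)) = 2 * (\<Prod>x\<in>e. int (deg E x))"
      by (simp add: d_def insert_Diff_if algebra_simps)
  qed
  also have "\<dots> = 2 * M2 E" by (simp add: M2_def sum_distrib_left)
  finally show ?thesis .
qed

end

lemma lin_sum:
  fixes Q Sx A AQ G AA :: "'b \<Rightarrow> int"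
  shows "(\<Sum>e\<in>X. c0 - c1 * Q e - c2 * Sx e + c3 * A e + AQ e + 2 * G e - AA e)
   = int (card X) * c0 - c1 * sum Q X - c2 * sum Sx X + c3 * sum A X + sum AQ X + 2 * sum G X - sum AA X"
  by (simp add: sum.distrib sum_subtractf sum_distrib_left)

theorem lemma2p3:
  fixes V :: "'a set" and E :: "'a set set" and m :: int
  assumes "simple_graph V E"
    and "girth_ge4 E"
    and "m = int (card E)"
  shows "rho1 V E = (m^2 + 4*m + 5) * M1 V E - (m + 2) * Fidx V E - (4*m + 6) * M2 E
           + M1pow V E 4 - (M1 V E)^2 + alpha_idx E - 2*m^2 - 2*m + 2 * gamma_idx V E"
proof -
  interpret tfg V E using assms(1,2) by unfold_locales
  let ?M = "M1 V E"
  have "rho1 V E = (\<Sum>e\<in>E. (m - a e + 1) * (?M - q e - 2 * s e + 3 * a e - 2))"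
    using rho_eq assms(3) by simp
  also have "\<dots> = (\<Sum>e\<in>E. (m+1)*(?M-2) - (m+1) * q e - (2*(m+1)) * s e + (3*(m+1) - ?M + 2) * a e
        + a e * q e + 2 * (a e * (s e - a e)) - a e ^ 2)"
    by (rule sum.cong[OF refl]) (simp add: algebra_simps power2_eq_square)
  also have "\<dots> = int (card E) * ((m+1)*(?M-2)) - (m+1) * (\<Sum>e\<in>E. q e) - (2*(m+1)) * (\<Sum>e\<in>E. s e)
        + (3*(m+1) - ?M + 2) * (\<Sum>e\<in>E. a e) + (\<Sum>e\<in>E. a e * q e)
        + 2 * (\<Sum>e\<in>E. a e * (s e - a e)) - (\<Sum>e\<in>E. a e ^ 2)"
    by (simp only: lin_sum)
  also have "\<dots> = (m^2 + 4*m + 5) * M1 V E - (m + 2) * Fidx V E - (4*m + 6) * M2 E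
           + M1pow V E 4 - (M1 V E)^2 + alpha_idx E - 2*m^2 - 2*m + 2 * gamma_idx V E"
    unfolding sum_q sum_s sum_a sum_aq gamma_eq[symmetric] sum_a2 assms(3)[symmetric]
    by (simp add: algebra_simps power2_eq_square)
  finally show ?thesis .
qed

end
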